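(* Let $\{X_t\}_{t\in\mathbb N^+}$ be a real-valued process adapted to a filtration $\{\mathcal F_t\}_{t\in\mathbb N}$ with $\mathcal F_0$ trivial, such that for all $t\in\mathbb N^+$, $\mathbb E[X_t\mid\mathcal F_{t-1}]=\mu$ (an unknown constant) and $\mathbb E[(X_t-\mu)^2\mid\mathcal F_{t-1}]\le\sigma^2$ ($\sigma^2$ known). Let $\alpha\in(0,1)$ and let $\{\lambda_t\}_{t\in\mathbb N^+}$ be any predictable process. Writing each $\sum$ for $\sum_{i=1}^t$, define $$U_t^+=\frac{\sum\lambda_i^2X_i}{3}-\sum\lambda_i,\qquad U_t^-=\frac{\sum\lambda_i^2X_i}{3}+\sum\lambda_i,$$ $$\mathrm{aCI}^{\mathsf{SN}+}_t=\left(\frac{U_t^+-\sqrt{D_t^+}}{\sum\lambda_i^2/3},\ \frac{U_t^++\sqrt{D_t^+}}{\sum\lambda_i^2/3}\right),\quad D_t^+=(U_t^+)^2-\frac{2\sum\lambda_i^2}{3}\left(\log(2/\alpha)-\sum\lambda_iX_i+\frac{\sum\lambda_i^2X_i^2+2\sigma^2\sum\lambda_i^2}{6}\right),$$ $$\mathrm{aCI}^{\mathsf{SN}-}_t=\left(\frac{U_t^--\sqrt{D_t^-}}{\sum\lambda_i^2/3},\ \frac{U_t^-+\sqrt{D_t^-}}{\sum\lambda_i^2/3}\right),\quad D_t^-=(U_t^-)^2-\frac{2\sum\lambda_i^2}{3}\left(\log(2/\alpha)+\sum\lambda_iX_i+\frac{\sum\lambda_i^2X_i^2+2\sigma^2\sum\lambda_i^2}{6}\right),$$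 with the convention that an interval is empty when the quantity under its square root is negative. Then $$\Pr\left[\forall t\in\mathbb N^+,\ \mu\notin\mathrm{aCI}^{\mathsf{SN}+}_t\right]\ge1-\alpha/2\quad\text{and}\quad\Pr\left[\forall t\in\mathbb N^+,\ \mu\notin\mathrm{aCI}^{\mathsf{SN}-}_t\right]\ge1-\alpha/2.$$
   Context: A process $\{\lambda_t\}$ is predictable if each $\lambda_t$ is $\mathcal F_{t-1}$-measurable. *)

theory Defs
  imports "HOL-Probability.Probability"
begin

definition sn_interval :: "real \<Rightarrow> real \<Rightarrow> real \<Rightarrow> real set" where
  "sn_interval U D S = (if D < 0 then {} else {(U - sqrt D) / S <..< (U + sqrt D) / S})"

definition U_plus :: "(nat \<Rightarrow> 'a \<Rightarrow> real) \<Rightarrow> (nat \<Rightarrow> 'a \<Rightarrow> real) \<Rightarrow> nat \<Rightarrow> 'a \<Rightarrow> real" where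
  "U_plus lam X t w = (\<Sum>i=1..t. (lam i w)^2 * X i w) / 3 - (\<Sum>i=1..t. lam i w)"

definition U_minus :: "(nat \<Rightarrow> 'a \<Rightarrow> real) \<Rightarrow> (nat \<Rightarrow> 'a \<Rightarrow> real) \<Rightarrow> nat \<Rightarrow> 'a \<Rightarrow> real" where
  "U_minus lam X t w = (\<Sum>i=1..t. (lam i w)^2 * X i w) / 3 + (\<Sum>i=1..t. lam i w)"

definition D_plus :: "real \<Rightarrow> real \<Rightarrow> (nat \<Rightarrow> 'a \<Rightarrow> real) \<Rightarrow> (nat \<Rightarrow> 'a \<Rightarrow> real) \<Rightarrow> nat \<Rightarrow> 'a \<Rightarrow> real" where
  "D_plus \<alpha> \<sigma>2 lam X t w =
     (U_plus lam X t w)^2 - 2 * (\<Sum>i=1..t. (lam i w)^2) / 3 *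
       (ln (2 / \<alpha>) - (\<Sum>i=1..t. lam i w * X i w)
        + ((\<Sum>i=1..t. (lam i w)^2 * (X i w)^2) + 2 * \<sigma>2 * (\<Sum>i=1..t. (lam i w)^2)) / 6)"

definition D_minus :: "real \<Rightarrow> real \<Rightarrow> (nat \<Rightarrow> 'a \<Rightarrow> real) \<Rightarrow> (nat \<Rightarrow> 'a \<Rightarrow> real) \<Rightarrow> nat \<Rightarrow> 'a \<Rightarrow> real" where
  "D_minus \<alpha> \<sigma>2 lam X t w =
     (U_minus lam X t w)^2 - 2 * (\<Sum>i=1..t. (lam i w)^2) / 3 *
       (ln (2 / \<alpha>) + (\<Sum>i=1..t. lam i w * X i w)
        + ((\<Sum>i=1..t. (lam i w)^2 * (X i w)^2) + 2 * \<sigma>2 * (\<Sum>i=1..t. (lam i w)^2)) / 6)"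

definition aCI_SN_plus :: "real \<Rightarrow> real \<Rightarrow> (nat \<Rightarrow> 'a \<Rightarrow> real) \<Rightarrow> (nat \<Rightarrow> 'a \<Rightarrow> real) \<Rightarrow> nat \<Rightarrow> 'a \<Rightarrow> real set" where
  "aCI_SN_plus \<alpha> \<sigma>2 lam X t w =
     sn_interval (U_plus lam X t w) (D_plus \<alpha> \<sigma>2 lam X t w) ((\<Sum>i=1..t. (lam i w)^2) / 3)"

definition aCI_SN_minus :: "real \<Rightarrow> real \<Rightarrow> (nat \<Rightarrow> 'a \<Rightarrow> real) \<Rightarrow> (nat \<Rightarrow> 'a \<Rightarrow> real) \<Rightarrow> nat \<Rightarrow> 'a \<Rightarrow> real set" where
  "aCI_SN_minus \<alpha> \<sigma>2 lam X t w =
     sn_interval (U_minus lam X t w) (D_minus \<alpha> \<sigma>2 lam X t w) ((\<Sum>i=1..t. (lam i w)^2) / 3)"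

end

theory Submission
  imports Defs
begin

lemma q_pos: "(0::real) < 1 + x + x^2/3"
proof -
  have "1 + x + x^2/3 = (x + 3/2)^2/3 + 1/4" by (simp add: power2_eq_square field_simps)
  also have "... > 0" by (simp add: add_nonneg_pos)
  finally show ?thesis .
qed

lemma exp_quad_bound: "exp (x - x^2/6) \<le> 1 + x + x^2/(3::real)"
proof -
  define f where "f = (\<lambda>x::real. ln (1 + x + x^2/3) - x + x^2/6)"
  have D: "DERIV f y :> y^3 / (9 * (1 + y + y^2/3))" for y
  proof -
    have "DERIV f y :> (1 + 2*y/3) / (1 + y + y^2/3) - 1 + y/3"
      unfolding f_def using q_pos[of y]
      by (auto intro!: derivative_eq_intros simp: power2_eq_square field_simps)
    moreover have "(1 + 2*y/3) / (1 + y + y^2/3) - 1 + y/3 = y^3 / (9 * (1 + y + y^2/3))"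
      using q_pos[of y] by (simp add: field_simps power2_eq_square power3_eq_cube)
    ultimately show ?thesis by simp
  qed
  have "f 0 \<le> f x"
  proof (cases "x \<ge> 0")
    case True
    show ?thesis
    proof (rule DERIV_nonneg_imp_nondecreasing[OF True])
      fix y :: real assume "0 \<le> y"
      then show "\<exists>d. DERIV f y :> d \<and> d \<ge> 0"
        using D[of y] q_pos[of y] by (intro exI[of _ "y^3 / (9 * (1 + y + y^2/3))"]) auto
    qed
  next
    case False
    show ?thesis
    proof (rule DERIV_nonpos_imp_nonincreasing[of x 0])
      show "x \<le> 0" using False by simp
      fix y :: real assume "y \<le> 0"
      then have "y^3 \<le> 0" using mult_nonpos_nonneg[of y "y*y"] by (simp add: power3_eq_cube mult.assoc)
      then show "\<exists>d. DERIV f y :> d \<and> d \<le> 0"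
        using D[of y] q_pos[of y] by (intro exI[of _ "y^3 / (9 * (1 + y + y^2/3))"]) (auto intro: divide_nonpos_pos)
    qed
  qed
  then have "x - x^2/6 \<le> ln (1 + x + x^2/3)" by (simp add: f_def)
  then show ?thesis using q_pos[of x] by (metis exp_le_cancel_iff exp_ln)
qed

lemma integrable_bounded_mult:
  fixes f h :: "'a \<Rightarrow> real"
  assumes "integrable M f" "h \<in> borel_measurable M" "\<And>x. x \<in> space M \<Longrightarrow> \<bar>h x\<bar> \<le> B"
  shows "integrable M (\<lambda>x. h x * f x)"
proof (rule Bochner_Integration.integrable_bound[where f="\<lambda>x. B * f x"])
  show "integrable M (\<lambda>x. B * f x)" using assms(1) by simp
  show "(\<lambda>x. h x * f x) \<in> borel_measurable M" using assms(1,2) by measurable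
  show "AE x in M. norm (h x * f x) \<le> norm (B * f x)"
  proof (rule AE_I2)
    fix x assume "x \<in> space M"
    then have "\<bar>h x\<bar> \<le> \<bar>B\<bar>" using assms(3) by fastforce
    then show "norm (h x * f x) \<le> norm (B * f x)" by (simp add: abs_mult mult_right_mono)
  qed
qed

definition Sg :: "(nat \<Rightarrow> 'a \<Rightarrow> real) \<Rightarrow> (nat \<Rightarrow> 'a \<Rightarrow> real) \<Rightarrow> real \<Rightarrow> real \<Rightarrow> nat \<Rightarrow> 'a \<Rightarrow> real" where
  "Sg lam X \<mu> \<sigma>2 t w = (\<Sum>i=1..t. lam i w * (X i w - \<mu>) - (lam i w)^2 * ((X i w - \<mu>)^2 + 2 * \<sigma>2) / 6)"


locale sn = prob_space M for M :: "'a measure" +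
  fixes F :: "nat \<Rightarrow> 'a measure" and X lam :: "nat \<Rightarrow> 'a \<Rightarrow> real" and \<mu> \<sigma>2 :: real
  assumes sub: "\<And>t. subalgebra M (F t)"
    and mono: "\<And>s t. s \<le> t \<Longrightarrow> sets (F s) \<subseteq> sets (F t)"
    and adapted: "\<And>t. t \<ge> 1 \<Longrightarrow> X t \<in> borel_measurable (F t)"
    and integ: "\<And>t. t \<ge> 1 \<Longrightarrow> integrable M (\<lambda>w. (X t w)^2)"
    and mean: "\<And>t. t \<ge> 1 \<Longrightarrow> AE w in M. real_cond_exp M (F (t - 1)) (X t) w = \<mu>"
    and var: "\<And>t. t \<ge> 1 \<Longrightarrow>
               AE w in M. real_cond_exp M (F (t - 1)) (\<lambda>w. (X t w - \<mu>)^2) w \<le> \<sigma>2"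
    and predictable: "\<And>t. t \<ge> 1 \<Longrightarrow> lam t \<in> borel_measurable (F (t - 1))"
    and sig: "\<sigma>2 \<ge> 0"
begin

definition g :: "nat \<Rightarrow> 'a \<Rightarrow> real" where
  "g i w = lam i w * (X i w - \<mu>) - (lam i w)^2 * ((X i w - \<mu>)^2 + 2 * \<sigma>2) / 6"

definition S :: "nat \<Rightarrow> 'a \<Rightarrow> real" where
  "S t w = (\<Sum>i=1..t. g i w)"

lemma space_F: "space (F t) = space M"
  using sub[of t] by (simp add: subalgebra_def)

lemma meas_up: "s \<le> t \<Longrightarrow> f \<in> borel_measurable (F s) \<Longrightarrow> f \<in> borel_measurable (F t)"
  by (rule measurable_from_subalg[of "F t" "F s"]) (auto simp: subalgebra_def space_F mono)

lemma meas_M: "f \<in> borel_measurable (F s) \<Longrightarrow> f \<in> borel_measurable M"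
  by (rule measurable_from_subalg[OF sub])

lemma sets_M: "A \<in> sets (F s) \<Longrightarrow> A \<in> sets M"
  using sub[of s] by (auto simp: subalgebra_def)

lemma X_meas: "1 \<le> i \<Longrightarrow> i \<le> t \<Longrightarrow> X i \<in> borel_measurable (F t)"
  by (metis meas_up adapted)

lemma lam_meas: "1 \<le> i \<Longrightarrow> i \<le> t \<Longrightarrow> lam i \<in> borel_measurable (F t)"
proof -
  assume "1 \<le> i" "i \<le> t"
  then show ?thesis using meas_up[of "i - 1" t "lam i"] predictable[of i] by linarith
qed

lemma g_meas:
  assumes "1 \<le> i" "i \<le> t" shows "g i \<in> borel_measurable (F t)"
proof -
  have [measurable]: "X i \<in> borel_measurable (F t)" "lam i \<in> borel_measurable (F t)"
    using X_meas lam_meas assms by auto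
  show ?thesis unfolding g_def[abs_def] by measurable
qed

lemma S_meas: "S t \<in> borel_measurable (F t)"
  unfolding S_def[abs_def] by (rule borel_measurable_sum) (use g_meas in auto)

lemma g_le: "g i w \<le> 3/2"
proof -
  let ?x = "lam i w * (X i w - \<mu>)"
  have "(?x - 3)^2 \<ge> 0" by simp
  then have "?x - ?x^2/6 \<le> 3/2" by (simp add: power2_eq_square field_simps)
  moreover have "(lam i w)^2 * ((X i w - \<mu>)^2 + 2 * \<sigma>2) / 6 \<ge> ?x^2/6"
  proof -
    have "?x^2 = (lam i w)^2 * (X i w - \<mu>)^2" by (simp add: power_mult_distrib)
    moreover have "(lam i w)^2 * \<sigma>2 \<ge> 0" using sig by simp
    ultimately show ?thesis by (simp add: distrib_left divide_right_mono mult.commute)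
  qed
  ultimately show ?thesis unfolding g_def by linarith
qed

lemma S_le: "S t w \<le> 3/2 * t"
proof -
  have "S t w \<le> (\<Sum>i=1..t. 3/2)" unfolding S_def by (rule sum_mono) (rule g_le)
  then show ?thesis by simp
qed

lemma S_Suc: "S (Suc t) w = S t w + g (Suc t) w"
  unfolding S_def by simp


lemma sfs: "sigma_finite_subalgebra M (F t)"
  by (rule finite_measure_subalgebra_is_sigma_finite)
     (simp add: finite_measure_subalgebra_def finite_measure_subalgebra_axioms_def sub finite_measure_axioms)

lemma X_int: assumes "1 \<le> i" shows "integrable M (X i)"
proof (rule square_integrable_imp_integrable)
  show "X i \<in> borel_measurable M" using adapted[OF assms] by (rule meas_M)
  show "integrable M (\<lambda>x. (X i x)^2)" using integ[OF assms] .
qed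

lemma xi2_int: assumes "1 \<le> i" shows "integrable M (\<lambda>w. (X i w - \<mu>)^2)"
proof -
  have "integrable M (\<lambda>w. (X i w)^2 - 2 * \<mu> * X i w + \<mu>^2)"
    using X_int[OF assms] integ[OF assms] by auto
  moreover have "(\<lambda>w. (X i w - \<mu>)^2) = (\<lambda>w. (X i w)^2 - 2 * \<mu> * X i w + \<mu>^2)"
    by (rule ext) (simp add: power2_diff mult.commute mult.left_commute)
  ultimately show ?thesis by simp
qed

lemma step_core:
  assumes i: "1 \<le> i" and Zm: "Z \<in> borel_measurable (F (i - 1))"
    and Z0: "\<And>w. w \<in> space M \<Longrightarrow> 0 \<le> Z w" and ZB: "\<And>w. w \<in> space M \<Longrightarrow> Z w \<le> B"
  shows "(\<integral>w. Z w * exp (g i w) \<partial>M) \<le> (\<integral>w. Z w \<partial>M)"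
proof -
  define G where "G = F (i - 1)"
  have sfG: "sigma_finite_subalgebra M G" unfolding G_def by (rule sfs)
  have [measurable]: "Z \<in> borel_measurable G" "lam i \<in> borel_measurable G"
    using Zm predictable[OF i] by (auto simp: G_def)
  have [measurable]: "Z \<in> borel_measurable M" "lam i \<in> borel_measurable M" "X i \<in> borel_measurable M"
    using Zm predictable[OF i] adapted[OF i] by (auto intro: meas_M)
  have Xint: "integrable M (X i)" using X_int[OF i] .
  have x2int: "integrable M (\<lambda>w. (X i w - \<mu>)^2)" using xi2_int[OF i] .
  obtain w0 where w0: "w0 \<in> space M" using not_empty by blast
  have B0: "0 \<le> B" using Z0[OF w0] ZB[OF w0] by linarith
  define C where "C n = {w \<in> space M. \<bar>lam i w\<bar> \<le> real n}" for n :: nat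
  have spG: "space G = space M" unfolding G_def by (rule space_F)
  have C_G[measurable]: "C n \<in> sets G" for n unfolding C_def spG[symmetric] by measurable
  define h where "h n w = Z w * indicator (C n) w * exp (- ((lam i w)^2 * \<sigma>2 / 3))" for n w
  have h_meas[measurable]: "h n \<in> borel_measurable G" for n unfolding h_def by measurable
  have h_measM[measurable]: "h n \<in> borel_measurable M" for n
    using h_meas[of n] unfolding G_def by (rule meas_M)
  have C_M[measurable]: "C n \<in> sets M" for n using C_G[of n] unfolding G_def by (rule sets_M)
  have h0: "0 \<le> h n w" if "w \<in> space M" for n w using Z0[OF that] unfolding h_def by simp
  have hB: "h n w \<le> B" if "w \<in> space M" for n w
  proof -
    have "exp (- ((lam i w)^2 * \<sigma>2 / 3)) \<le> 1" using sig by simp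
    moreover have "Z w * indicator (C n) w \<le> B" using Z0[OF that] ZB[OF that] B0
      by (simp split: split_indicator)
    moreover have "0 \<le> Z w * indicator (C n) w" using Z0[OF that] by simp
    ultimately have "h n w \<le> Z w * indicator (C n) w"
      unfolding h_def by (intro mult_right_le_one_le) auto
    then show ?thesis using \<open>Z w * indicator (C n) w \<le> B\<close> by linarith
  qed
  have hl_bound: "\<bar>h n w * lam i w\<bar> \<le> B * n" if "w \<in> space M" for n w
  proof (cases "w \<in> C n")
    case True
    then have "\<bar>lam i w\<bar> \<le> n" by (simp add: C_def)
    then have "h n w * \<bar>lam i w\<bar> \<le> B * n"
      using h0[OF that] hB[OF that] B0 by (intro mult_mono) auto
    then show ?thesis using h0[OF that] by (simp add: abs_mult)
  next
    case False then show ?thesis using B0 by (simp add: h_def)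
  qed
  have hl2_bound: "\<bar>h n w * (lam i w)^2 / 3\<bar> \<le> B * n^2" if "w \<in> space M" for n w
  proof (cases "w \<in> C n")
    case True
    then have "\<bar>lam i w\<bar> \<le> n" by (simp add: C_def)
    then have "(lam i w)^2 \<le> n^2" using power_mono[of "\<bar>lam i w\<bar>" "real n" 2] by simp
    then have "h n w * (lam i w)^2 \<le> B * n^2"
      using h0[OF that] hB[OF that] B0 by (intro mult_mono) auto
    then have "\<bar>h n w * (lam i w)^2\<bar> \<le> B * n^2" using h0[OF that] by (simp add: abs_mult)
    then show ?thesis by simp
  next
    case False then show ?thesis using B0 by (simp add: h_def)
  qed
  have gM[measurable]: "g i \<in> borel_measurable M" using g_meas[OF i order_refl] by (rule meas_M)
  have Zint: "integrable M Z"
    by (rule integrable_const_bound[where B=B]) (use Z0 ZB in auto)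
  have claim: "(\<integral>w. Z w * indicator (C n) w * exp (g i w) \<partial>M) \<le> (\<integral>w. Z w \<partial>M)" for n
  proof -
    define x where "x w = lam i w * (X i w - \<mu>)" for w
    define hl where "hl w = h n w * lam i w" for w
    define hq where "hq w = h n w * (lam i w)^2 / 3" for w
    have hl_meas[measurable]: "hl \<in> borel_measurable G" unfolding hl_def by measurable
    have hq_meas[measurable]: "hq \<in> borel_measurable G" unfolding hq_def by measurable
    have hl_measM[measurable]: "hl \<in> borel_measurable M" using hl_meas unfolding G_def by (rule meas_M)
    have hq_measM[measurable]: "hq \<in> borel_measurable M" using hq_meas unfolding G_def by (rule meas_M)
    have pw: "Z w * indicator (C n) w * exp (g i w)
       \<le> h n w + hl w * X i w - \<mu> * hl w + hq w * (X i w - \<mu>)^2" if w: "w \<in> space M" for w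
    proof -
      have x2: "(x w)^2 = (lam i w)^2 * (X i w - \<mu>)^2" by (simp add: x_def power_mult_distrib)
      have "g i w = (x w - (x w)^2/6) + (- ((lam i w)^2 * \<sigma>2 / 3))"
        unfolding x2 by (simp add: g_def x_def field_simps)
      then have "exp (g i w) = exp (x w - (x w)^2/6) * exp (- ((lam i w)^2 * \<sigma>2 / 3))"
        by (simp only: exp_add)
      then have "Z w * indicator (C n) w * exp (g i w) = h n w * exp (x w - (x w)^2/6)"
        unfolding h_def by (simp only: mult_ac)
      also have "\<dots> \<le> h n w * (1 + x w + (x w)^2/3)"
        by (rule mult_left_mono[OF exp_quad_bound h0[OF w]])
      also have "\<dots> = h n w + hl w * X i w - \<mu> * hl w + hq w * (X i w - \<mu>)^2"
        unfolding x2 by (simp add: hl_def hq_def x_def algebra_simps)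
      finally show ?thesis .
    qed
    have int_lhs: "integrable M (\<lambda>w. Z w * indicator (C n) w * exp (g i w))"
    proof (rule integrable_const_bound[where B="B * exp (3/2)"])
      show "AE w in M. norm (Z w * indicator (C n) w * exp (g i w)) \<le> B * exp (3/2)"
      proof (rule AE_I2)
        fix w assume w: "w \<in> space M"
        have "exp (g i w) \<le> exp (3/2)" using g_le by simp
        moreover have "0 \<le> Z w * indicator (C n) w" "Z w * indicator (C n) w \<le> B"
          using Z0[OF w] ZB[OF w] B0 by (auto split: split_indicator)
        ultimately have "Z w * indicator (C n) w * exp (g i w) \<le> B * exp (3/2)"
          by (intro mult_mono) auto
        then show "norm (Z w * indicator (C n) w * exp (g i w)) \<le> B * exp (3/2)"
          using Z0[OF w] by simp
      qed
    qed measurable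
    have int_h: "integrable M (h n)"
      by (rule integrable_const_bound[where B=B]) (use h0 hB in auto)
    have int_hl: "integrable M hl"
      by (rule integrable_const_bound[where B="B * n"]) (use hl_bound in \<open>auto simp: hl_def\<close>)
    have int_hlX: "integrable M (\<lambda>w. hl w * X i w)"
      by (rule integrable_bounded_mult[OF Xint hl_measM]) (use hl_bound in \<open>auto simp: hl_def\<close>)
    have int_hqX: "integrable M (\<lambda>w. hq w * (X i w - \<mu>)^2)"
      by (rule integrable_bounded_mult[OF x2int hq_measM]) (use hl2_bound in \<open>auto simp: hq_def\<close>)
    have int_hq: "integrable M hq"
      by (rule integrable_const_bound[where B="B * n^2"]) (use hl2_bound in \<open>auto simp: hq_def\<close>)
    have "(\<integral>w. Z w * indicator (C n) w * exp (g i w) \<partial>M)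
        \<le> (\<integral>w. h n w + hl w * X i w - \<mu> * hl w + hq w * (X i w - \<mu>)^2 \<partial>M)"
      by (rule integral_mono[OF int_lhs _ pw]) (use int_h int_hl int_hlX int_hqX in auto)
    also have "\<dots> = (\<integral>w. h n w \<partial>M) + (\<integral>w. hl w * X i w \<partial>M) - \<mu> * (\<integral>w. hl w \<partial>M)
        + (\<integral>w. hq w * (X i w - \<mu>)^2 \<partial>M)"
      using int_h int_hl int_hlX int_hqX by simp
    also have "(\<integral>w. hl w * X i w \<partial>M) = \<mu> * (\<integral>w. hl w \<partial>M)"
    proof -
      have "(\<integral>w. hl w * X i w \<partial>M) = (\<integral>w. hl w * real_cond_exp M G (X i) w \<partial>M)"
        by (rule sigma_finite_subalgebra.real_cond_exp_intg(2)[OF sfG int_hlX, symmetric]) auto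
      also have "\<dots> = (\<integral>w. hl w * \<mu> \<partial>M)"
        by (rule integral_cong_AE) (use mean[OF i] in \<open>auto simp: G_def\<close>)
      finally show ?thesis by simp
    qed
    also have "(\<integral>w. hq w * (X i w - \<mu>)^2 \<partial>M) \<le> (\<integral>w. hq w * \<sigma>2 \<partial>M)"
    proof -
      have "(\<integral>w. hq w * (X i w - \<mu>)^2 \<partial>M)
          = (\<integral>w. hq w * real_cond_exp M G (\<lambda>w. (X i w - \<mu>)^2) w \<partial>M)"
        by (rule sigma_finite_subalgebra.real_cond_exp_intg(2)[OF sfG int_hqX, symmetric]) auto
      also have "\<dots> \<le> (\<integral>w. hq w * \<sigma>2 \<partial>M)"
      proof (rule integral_mono_AE)
        show "integrable M (\<lambda>w. hq w * real_cond_exp M G (\<lambda>w. (X i w - \<mu>)^2) w)"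
          by (rule sigma_finite_subalgebra.real_cond_exp_intg(1)[OF sfG int_hqX]) auto
        show "integrable M (\<lambda>w. hq w * \<sigma>2)" using int_hq by simp
        show "AE w in M. hq w * real_cond_exp M G (\<lambda>w. (X i w - \<mu>)^2) w \<le> hq w * \<sigma>2"
          using var[OF i]
        proof (eventually_elim)
          case (elim w)
          show ?case
          proof (cases "w \<in> space M")
            case True
            have "0 \<le> hq w" using h0[OF True] by (simp add: hq_def)
            then show ?thesis using elim by (simp add: G_def mult_left_mono)
          next
            case False then show ?thesis by (simp add: hq_def h_def C_def)
          qed
        qed
      qed
      finally show ?thesis .
    qed
    finally have 1: "(\<integral>w. Z w * indicator (C n) w * exp (g i w) \<partial>M)
        \<le> (\<integral>w. h n w \<partial>M) + (\<integral>w. hq w * \<sigma>2 \<partial>M)" by simp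
    also have "\<dots> = (\<integral>w. h n w + hq w * \<sigma>2 \<partial>M)" using int_h int_hq by simp
    also have "\<dots> \<le> (\<integral>w. Z w \<partial>M)"
    proof (rule integral_mono)
      show "integrable M (\<lambda>w. h n w + hq w * \<sigma>2)" using int_h int_hq by simp
      show "integrable M Z" by (rule Zint)
      fix w assume w: "w \<in> space M"
      define y where "y = (lam i w)^2 * \<sigma>2 / 3"
      have "exp (- y) * (1 + y) \<le> 1"
      proof -
        have "1 + y \<le> exp y" by (rule exp_ge_add_one_self)
        then have "exp (- y) * (1 + y) \<le> exp (- y) * exp y" by (intro mult_left_mono) auto
        then show ?thesis by (simp add: exp_minus field_simps)
      qed
      moreover have "0 \<le> Z w * indicator (C n) w" "Z w * indicator (C n) w \<le> Z w"
        using Z0[OF w] by (auto split: split_indicator)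
      moreover have "0 \<le> exp (- y) * (1 + y)" using sig by (simp add: y_def)
      ultimately have "Z w * indicator (C n) w * (exp (- y) * (1 + y)) \<le> Z w * indicator (C n) w"
        by (intro mult_right_le_one_le) auto
      then have "Z w * indicator (C n) w * (exp (- y) * (1 + y)) \<le> Z w"
        using \<open>Z w * indicator (C n) w \<le> Z w\<close> by linarith
      moreover have "h n w + hq w * \<sigma>2 = Z w * indicator (C n) w * (exp (- y) * (1 + y))"
        by (simp add: h_def hq_def y_def algebra_simps)
      ultimately show "h n w + hq w * \<sigma>2 \<le> Z w" by simp
    qed
    finally show ?thesis .
  qed
  have bnd: "norm (Z w * indicator (C n) w * exp (g i w)) \<le> B * exp (3/2)" if w: "w \<in> space M" for n w
  proof -
    have "exp (g i w) \<le> exp (3/2)" using g_le by simp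
    moreover have "0 \<le> Z w * indicator (C n) w" "Z w * indicator (C n) w \<le> B"
      using Z0[OF w] ZB[OF w] B0 by (auto split: split_indicator)
    ultimately have "Z w * indicator (C n) w * exp (g i w) \<le> B * exp (3/2)"
      by (intro mult_mono) auto
    then show ?thesis using Z0[OF w] by simp
  qed
  have lim: "(\<lambda>n. \<integral>w. Z w * indicator (C n) w * exp (g i w) \<partial>M) \<longlonglongrightarrow> (\<integral>w. Z w * exp (g i w) \<partial>M)"
  proof (rule integral_dominated_convergence[where w="\<lambda>w. B * exp (3/2)"])
    show "AE w in M. (\<lambda>n. Z w * indicator (C n) w * exp (g i w)) \<longlonglongrightarrow> Z w * exp (g i w)"
    proof (rule AE_I2)
      fix w assume w: "w \<in> space M"
      define N where "N = nat \<lceil>\<bar>lam i w\<bar>\<rceil>"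
      have "\<bar>lam i w\<bar> \<le> real N" unfolding N_def by (rule real_nat_ceiling_ge)
      then have "\<forall>n\<ge>N. Z w * indicator (C n) w * exp (g i w) = Z w * exp (g i w)"
        using w by (auto simp: C_def indicator_def)
      then have "eventually (\<lambda>n. Z w * indicator (C n) w * exp (g i w) = Z w * exp (g i w)) sequentially"
        by (auto simp: eventually_sequentially)
      then show "(\<lambda>n. Z w * indicator (C n) w * exp (g i w)) \<longlonglongrightarrow> Z w * exp (g i w)"
        by (rule tendsto_eventually)
    qed
    show "AE w in M. norm (Z w * indicator (C n) w * exp (g i w)) \<le> B * exp (3/2)" for n
      using bnd by (intro AE_I2) auto
  qed auto
  show ?thesis by (rule LIMSEQ_le_const2[OF lim]) (use claim in auto)
qed


lemma expS_bound: "0 \<le> exp (S t w)" "exp (S t w) \<le> exp (3/2 * t)"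
  using S_le[of t w] by auto

lemma S_measM[measurable]: "S t \<in> borel_measurable M"
  using S_meas by (rule meas_M)

lemma int_ind_expS: "A \<in> sets M \<Longrightarrow> integrable M (\<lambda>w. indicator A w * exp (S t w))"
  by (rule integrable_const_bound[where B="exp (3/2 * t)"])
     (use expS_bound in \<open>auto simp: indicator_def\<close>)

lemma step:
  assumes A: "A \<in> sets (F j)"
  shows "(\<integral>w. indicator A w * exp (S (Suc j) w) \<partial>M) \<le> (\<integral>w. indicator A w * exp (S j w) \<partial>M)"
proof -
  have "(\<integral>w. (indicator A w * exp (S j w)) * exp (g (Suc j) w) \<partial>M) \<le> (\<integral>w. indicator A w * exp (S j w) \<partial>M)"
  proof (rule step_core[where B="exp (3/2 * j)"])
    show "(\<lambda>w. indicator A w * exp (S j w)) \<in> borel_measurable (F (Suc j - 1))"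
      using A S_meas[of j] by simp
    fix w assume "w \<in> space M"
    show "0 \<le> indicator A w * exp (S j w)" by simp
    show "indicator A w * exp (S j w) \<le> exp (3/2 * j)"
      using expS_bound[of j w] by (simp add: indicator_def)
  qed simp
  moreover have "(\<lambda>w. indicator A w * exp (S (Suc j) w)) = (\<lambda>w. (indicator A w * exp (S j w)) * exp (g (Suc j) w))"
    by (rule ext) (simp add: S_Suc exp_add)
  ultimately show ?thesis by simp
qed

definition BB :: "real \<Rightarrow> nat \<Rightarrow> 'a set" where
  "BB L N = {w \<in> space M. \<exists>t\<in>{1..N}. L < S t w}"

lemma BB_sets: "BB L N \<in> sets (F N)"
proof -
  have "BB L N = (\<Union>t\<in>{1..N}. {w \<in> space (F N). L < S t w})"
    by (auto simp: BB_def space_F)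
  also have "\<dots> \<in> sets (F N)"
  proof (rule sets.finite_UN)
    fix t assume t: "t \<in> {1..N}"
    have [measurable]: "S t \<in> borel_measurable (F N)" using meas_up[of t N] S_meas t by auto
    show "{w \<in> space (F N). L < S t w} \<in> sets (F N)" by measurable
  qed simp
  finally show ?thesis .
qed

lemma BB_M[measurable]: "BB L N \<in> sets M"
  using BB_sets by (rule sets_M)

lemma ville_finite:
  "exp L * measure M (BB L N) + (\<integral>w. indicator (space M - BB L N) w * exp (S N w) \<partial>M) \<le> 1"
proof (induction N)
  case 0
  have "BB L 0 = {}" by (auto simp: BB_def)
  moreover have "(\<integral>w. indicator (space M) w * exp (S 0 w) \<partial>M) = 1"
  proof -
    have "(\<integral>w. indicator (space M) w * exp (S 0 w) \<partial>M) = (\<integral>w. 1 \<partial>M)"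
      by (rule Bochner_Integration.integral_cong) (auto simp: S_def)
    then show ?thesis by (simp add: prob_space)
  qed
  ultimately show ?case by simp
next
  case (Suc N)
  define D where "D = space M - BB L N"
  define E where "E = {w \<in> space M. L < S (Suc N) w}"
  have D_F: "D \<in> sets (F N)" unfolding D_def using sets.compl_sets[OF BB_sets[of L N]] space_F[of N]
    by simp
  have [measurable]: "D \<in> sets M" using D_F by (rule sets_M)
  have [measurable]: "E \<in> sets M" unfolding E_def by measurable
  have iv: "{1..Suc N} = insert (Suc N) {1..N}" by auto
  have BB_Suc: "BB L (Suc N) = BB L N \<union> (D \<inter> E)"
    unfolding BB_def D_def E_def iv by blast
  have cmpl: "space M - BB L (Suc N) = D - E"
    unfolding BB_def D_def E_def iv by blast
  have m: "measure M (BB L (Suc N)) = measure M (BB L N) + measure M (D \<inter> E)"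
    unfolding BB_Suc by (rule finite_measure_Union) (auto simp: D_def)
  have "exp L * measure M (D \<inter> E) = (\<integral>w. indicator (D \<inter> E) w * exp L \<partial>M)"
    by simp
  also have "\<dots> \<le> (\<integral>w. indicator (D \<inter> E) w * exp (S (Suc N) w) \<partial>M)"
  proof (rule integral_mono)
    show "integrable M (\<lambda>w. indicator (D \<inter> E) w * exp L)"
      by (rule integrable_const_bound[where B="exp L"]) (auto simp: indicator_def)
    show "integrable M (\<lambda>w. indicator (D \<inter> E) w * exp (S (Suc N) w))"
      by (rule int_ind_expS) simp
    fix w assume "w \<in> space M"
    show "indicator (D \<inter> E) w * exp L \<le> indicator (D \<inter> E) w * exp (S (Suc N) w)"
      by (auto simp: E_def indicator_def less_imp_le)
  qed
  finally have 1: "exp L * measure M (D \<inter> E) \<le> (\<integral>w. indicator (D \<inter> E) w * exp (S (Suc N) w) \<partial>M)" .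
  have 2: "(\<integral>w. indicator (D \<inter> E) w * exp (S (Suc N) w) \<partial>M) + (\<integral>w. indicator (D - E) w * exp (S (Suc N) w) \<partial>M)
      = (\<integral>w. indicator D w * exp (S (Suc N) w) \<partial>M)"
  proof -
    have "(\<integral>w. indicator (D \<inter> E) w * exp (S (Suc N) w) \<partial>M) + (\<integral>w. indicator (D - E) w * exp (S (Suc N) w) \<partial>M)
      = (\<integral>w. indicator (D \<inter> E) w * exp (S (Suc N) w) + indicator (D - E) w * exp (S (Suc N) w) \<partial>M)"
      by (rule Bochner_Integration.integral_add[symmetric]) (auto intro: int_ind_expS)
    also have "\<dots> = (\<integral>w. indicator D w * exp (S (Suc N) w) \<partial>M)"
      by (rule Bochner_Integration.integral_cong) (auto simp: indicator_def)
    finally show ?thesis .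
  qed
  have 3: "(\<integral>w. indicator D w * exp (S (Suc N) w) \<partial>M) \<le> (\<integral>w. indicator D w * exp (S N w) \<partial>M)"
    by (rule step[OF D_F])
  show ?case
    using Suc.IH 1 2 3 unfolding m cmpl D_def[symmetric] by (simp add: algebra_simps)
qed

lemma ville:
  "measure M {w \<in> space M. \<exists>t\<ge>1. L < S t w} \<le> exp (- L)"
proof -
  have le: "measure M (BB L N) \<le> exp (- L)" for N
  proof -
    have "0 \<le> (\<integral>w. indicator (space M - BB L N) w * exp (S N w) \<partial>M)"
      by (rule Bochner_Integration.integral_nonneg) auto
    then have "exp L * measure M (BB L N) \<le> 1" using ville_finite[of L N] by linarith
    then show ?thesis by (simp add: exp_minus field_simps mult.commute)
  qed
  have inc: "incseq (BB L)"
    by (rule incseq_SucI) (auto simp: BB_def)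
  have eq: "{w \<in> space M. \<exists>t\<ge>1. L < S t w} = (\<Union>N. BB L N)"
  proof (intro set_eqI iffI)
    fix w assume "w \<in> {w \<in> space M. \<exists>t\<ge>1. L < S t w}"
    then obtain t where "w \<in> space M" "1 \<le> t" "L < S t w" by auto
    then have "w \<in> BB L t" by (auto simp: BB_def)
    then show "w \<in> (\<Union>N. BB L N)" by blast
  qed (auto simp: BB_def)
  have "(\<lambda>N. measure M (BB L N)) \<longlonglongrightarrow> measure M (\<Union>N. BB L N)"
    by (rule finite_Lim_measure_incseq) (use inc in auto)
  then show ?thesis unfolding eq by (rule LIMSEQ_le_const2) (use le in auto)
qed


lemma S_eq: "S t w = Sg lam X \<mu> \<sigma>2 t w"
  by (simp add: S_def g_def Sg_def)

end

lemma Sg_expand: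
  "Sg lam X \<mu> \<sigma>2 t w = (\<Sum>i=1..t. lam i w * X i w) - \<mu> * (\<Sum>i=1..t. lam i w)
     - (\<Sum>i=1..t. (lam i w)^2 * (X i w)^2) / 6 + \<mu> * (\<Sum>i=1..t. (lam i w)^2 * X i w) / 3
     - \<mu>^2 * (\<Sum>i=1..t. (lam i w)^2) / 6 - \<sigma>2 * (\<Sum>i=1..t. (lam i w)^2) / 3"
proof (induction t)
  case 0 then show ?case by (simp add: Sg_def)
next
  case (Suc t)
  have "Sg lam X \<mu> \<sigma>2 (Suc t) w = Sg lam X \<mu> \<sigma>2 t w +
     (lam (Suc t) w * (X (Suc t) w - \<mu>) - (lam (Suc t) w)^2 * ((X (Suc t) w - \<mu>)^2 + 2 * \<sigma>2) / 6)"
    by (simp add: Sg_def)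
  then show ?case using Suc.IH by (simp add: power2_diff field_simps)
qed

lemma interval_iff:
  assumes "0 < Sd"
  shows "m \<in> sn_interval U D Sd \<longleftrightarrow> (m * Sd - U)^2 < D"
proof
  assume "m \<in> sn_interval U D Sd"
  then have D: "\<not> D < 0" and a: "(U - sqrt D) / Sd < m" and b: "m < (U + sqrt D) / Sd"
    by (auto simp: sn_interval_def split: if_splits)
  from a b assms have "U - sqrt D < m * Sd" "m * Sd < U + sqrt D"
    by (auto simp: field_simps)
  then have "\<bar>m * Sd - U\<bar> < sqrt D" by linarith
  then have "\<bar>m * Sd - U\<bar>^2 < (sqrt D)^2"
    by (intro power_strict_mono) auto
  then show "(m * Sd - U)^2 < D" using D by simp
next
  assume h: "(m * Sd - U)^2 < D"
  then have D: "0 \<le> D" by (metis le_less_trans zero_le_power2 less_imp_le)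
  have "sqrt ((m * Sd - U)^2) < sqrt D" using h by (rule real_sqrt_less_mono)
  then have "\<bar>m * Sd - U\<bar> < sqrt D" by simp
  then have "U - sqrt D < m * Sd" "m * Sd < U + sqrt D" by linarith+
  with assms have "(U - sqrt D) / Sd < m" "m < (U + sqrt D) / Sd"
    by (auto simp: field_simps)
  then show "m \<in> sn_interval U D Sd" using D by (auto simp: sn_interval_def)
qed

lemma aCI_plus_iff:
  assumes "0 < \<alpha>" "\<alpha> < 1"
  shows "\<mu> \<in> aCI_SN_plus \<alpha> \<sigma>2 lam X t w \<longleftrightarrow> ln (2 / \<alpha>) < Sg lam X \<mu> \<sigma>2 t w"
proof -
  define P where "P = (\<Sum>i=1..t. (lam i w)^2)"
  define Q where "Q = (\<Sum>i=1..t. (lam i w)^2 * X i w)"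
  define R where "R = (\<Sum>i=1..t. lam i w)"
  define T where "T = (\<Sum>i=1..t. lam i w * X i w)"
  define V where "V = (\<Sum>i=1..t. (lam i w)^2 * (X i w)^2)"
  define L where "L = ln (2 / \<alpha>)"
  have L0: "0 < L" unfolding L_def using assms by (simp add: ln_gt_zero)
  have Sg: "Sg lam X \<mu> \<sigma>2 t w = T - \<mu> * R - V / 6 + \<mu> * Q / 3 - \<mu>^2 * P / 6 - \<sigma>2 * P / 3"
    unfolding P_def Q_def R_def T_def V_def by (rule Sg_expand)
  have U: "U_plus lam X t w = Q / 3 - R" by (simp add: U_plus_def Q_def R_def)
  have D: "D_plus \<alpha> \<sigma>2 lam X t w = (Q / 3 - R)^2 - 2 * P / 3 * (L - T + (V + 2 * \<sigma>2 * P) / 6)"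
    by (simp add: D_plus_def U_plus_def Q_def R_def P_def T_def V_def L_def)
  have A: "aCI_SN_plus \<alpha> \<sigma>2 lam X t w = sn_interval (Q / 3 - R) ((Q / 3 - R)^2 - 2 * P / 3 * (L - T + (V + 2 * \<sigma>2 * P) / 6)) (P / 3)"
    unfolding aCI_SN_plus_def U D P_def ..
  have P0: "0 \<le> P" unfolding P_def by (intro sum_nonneg) auto
  show ?thesis
  proof (cases "P = 0")
    case True
    then have "\<forall>i\<in>{1..t}. lam i w = 0" unfolding P_def
      by (subst (asm) sum_nonneg_eq_0_iff) auto
    then have "R = 0" "T = 0" "Q = 0" "V = 0" by (simp_all add: R_def T_def Q_def V_def)
    then have "Sg lam X \<mu> \<sigma>2 t w = 0" using Sg True by simp
    moreover have "aCI_SN_plus \<alpha> \<sigma>2 lam X t w = {}" unfolding A using True by (simp add: sn_interval_def)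
    ultimately show ?thesis using L0 L_def by simp
  next
    case False
    then have Pp: "0 < P / 3" using P0 by simp
    have "(\<mu> * (P/3) - (Q / 3 - R))^2 - ((Q / 3 - R)^2 - 2 * P / 3 * (L - T + (V + 2 * \<sigma>2 * P) / 6))
        = (P / 3) * (2 * (L - Sg lam X \<mu> \<sigma>2 t w))"
      unfolding Sg by (simp add: power2_eq_square field_simps)
    then have "\<mu> \<in> aCI_SN_plus \<alpha> \<sigma>2 lam X t w \<longleftrightarrow> (P / 3) * (2 * (L - Sg lam X \<mu> \<sigma>2 t w)) < 0"
      unfolding A interval_iff[OF Pp] by linarith
    also have "\<dots> \<longleftrightarrow> L < Sg lam X \<mu> \<sigma>2 t w" using Pp by (simp add: mult_less_0_iff)
    finally show ?thesis unfolding L_def .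
  qed
qed

lemma aCI_minus_eq:
  "aCI_SN_minus \<alpha> \<sigma>2 lam X t w = aCI_SN_plus \<alpha> \<sigma>2 (\<lambda>t w. - lam t w) X t w"
  by (simp add: aCI_SN_minus_def aCI_SN_plus_def U_minus_def U_plus_def D_minus_def D_plus_def sum_negf)


theorem lemma5:
  fixes M :: "'a measure" and F :: "nat \<Rightarrow> 'a measure"
    and X lam :: "nat \<Rightarrow> 'a \<Rightarrow> real" and \<mu> \<sigma>2 \<alpha> :: real
  assumes "prob_space M"
    and sub: "\<And>t. subalgebra M (F t)"
    and mono: "\<And>s t. s \<le> t \<Longrightarrow> sets (F s) \<subseteq> sets (F t)"
    and triv: "sets (F 0) = {{}, space M}"
    and adapted: "\<And>t. t \<ge> 1 \<Longrightarrow> X t \<in> borel_measurable (F t)"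
    and integrable: "\<And>t. t \<ge> 1 \<Longrightarrow> integrable M (\<lambda>w. (X t w)^2)"
    and mean: "\<And>t. t \<ge> 1 \<Longrightarrow> AE w in M. real_cond_exp M (F (t - 1)) (X t) w = \<mu>"
    and var: "\<And>t. t \<ge> 1 \<Longrightarrow>
               AE w in M. real_cond_exp M (F (t - 1)) (\<lambda>w. (X t w - \<mu>)^2) w \<le> \<sigma>2"
    and alpha: "0 < \<alpha>" "\<alpha> < 1"
    and predictable: "\<And>t. t \<ge> 1 \<Longrightarrow> lam t \<in> borel_measurable (F (t - 1))"
  shows "measure M {w \<in> space M. \<forall>t\<ge>1. \<mu> \<notin> aCI_SN_plus \<alpha> \<sigma>2 lam X t w} \<ge> 1 - \<alpha> / 2
       \<and> measure M {w \<in> space M. \<forall>t\<ge>1. \<mu> \<notin> aCI_SN_minus \<alpha> \<sigma>2 lam X t w} \<ge> 1 - \<alpha> / 2"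
proof -
  interpret prob_space M by (rule assms(1))
  have sfs0: "sigma_finite_subalgebra M (F 0)"
    by (rule finite_measure_subalgebra_is_sigma_finite)
       (simp add: finite_measure_subalgebra_def finite_measure_subalgebra_axioms_def sub finite_measure_axioms)
  have X1: "X 1 \<in> borel_measurable M"
    using adapted[of 1, OF order_refl] by (rule measurable_from_subalg[OF sub])
  have sig: "0 \<le> \<sigma>2"
  proof -
    have "AE w in M. 0 \<le> real_cond_exp M (F 0) (\<lambda>w. (X 1 w - \<mu>)^2) w"
      by (rule sigma_finite_subalgebra.real_cond_exp_pos[OF sfs0]) (use X1 in auto)
    moreover have "AE w in M. real_cond_exp M (F 0) (\<lambda>w. (X 1 w - \<mu>)^2) w \<le> \<sigma>2"
      using var[of 1] by simp
    ultimately have "AE w in M. 0 \<le> \<sigma>2" by eventually_elim (rule order_trans)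
    then show ?thesis by (simp add: AE_const)
  qed
  interpret p: sn M F X lam \<mu> \<sigma>2
    by unfold_locales (use sub mono adapted integrable mean var predictable sig in auto)
  interpret m: sn M F X "\<lambda>t w. - lam t w" \<mu> \<sigma>2
  proof unfold_locales
    show "(\<lambda>w. - lam t w) \<in> borel_measurable (F (t - 1))" if "1 \<le> t" for t
      using predictable[OF that] by measurable
  qed (use sub mono adapted integrable mean var sig in auto)
  define L where "L = ln (2 / \<alpha>)"
  have eL: "exp (- L) = \<alpha> / 2" unfolding L_def using alpha by (simp add: exp_minus)
  have plus_set: "{w \<in> space M. \<forall>t\<ge>1. \<mu> \<notin> aCI_SN_plus \<alpha> \<sigma>2 lam X t w}
      = space M - {w \<in> space M. \<exists>t\<ge>1. L < p.S t w}"
    using aCI_plus_iff[OF alpha, of \<mu> \<sigma>2 lam X] by (auto simp: p.S_eq L_def)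
  have minus_set: "{w \<in> space M. \<forall>t\<ge>1. \<mu> \<notin> aCI_SN_minus \<alpha> \<sigma>2 lam X t w}
      = space M - {w \<in> space M. \<exists>t\<ge>1. L < m.S t w}"
    using aCI_plus_iff[OF alpha, of \<mu> \<sigma>2 "\<lambda>t w. - lam t w" X] by (auto simp: m.S_eq L_def aCI_minus_eq)
  have Ep: "{w \<in> space M. \<exists>t\<ge>1. L < p.S t w} \<in> sets M" by measurable
  have Em: "{w \<in> space M. \<exists>t\<ge>1. L < m.S t w} \<in> sets M" by measurable
  have "measure M (space M - {w \<in> space M. \<exists>t\<ge>1. L < p.S t w}) \<ge> 1 - \<alpha> / 2"
    using p.ville[of L] eL prob_compl[OF Ep] by simp
  moreover have "measure M (space M - {w \<in> space M. \<exists>t\<ge>1. L < m.S t w}) \<ge> 1 - \<alpha> / 2"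
    using m.ville[of L] eL prob_compl[OF Em] by simp
  ultimately show ?thesis unfolding plus_set minus_set by simp
qed

end
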